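(* Let $\mathbb{P}$ be a Pawlikowski lattice satisfying $\mathsf{S}_1(\mathbb{V}_1,\mathbb{V}_1)$. Then Player I does not have a winning strategy in the game $\mathsf{G}_1(\mathbb{V}_1,\mathbb{V}_1)$.
   Context: A lattice is a poset where any two elements have a supremum and an infimum; it is bounded if it has a minimum $0$ and a maximum $1$. A prime element is $q\neq 1$ with: $a\wedge b\leq q$ implies $a\leq q$ or $b\leq q$. Enough prime elements: whenever $a\not\leq b$ there is a prime $q$ with $b\leq q$, $a\not\leq q$. A Pawlikowski lattice is a bounded lattice with enough prime elements such that $(\sup A)\wedge b=\sup\{a\wedge b:a\in A\}$ for every $b\in\mathbb{P}$ and every subset $A\subseteq\mathbb{P}$ having a supremum. $\mathbb{V}_1$ is the family of subsets $A\subseteq\mathbb{P}$ with $\sup A=1$. $\mathsf{S}_1(\mathbb{V}_1,\mathbb{V}_1)$: for every sequence $(A_n)_{n\in\omega}$ in $\mathbb{V}_1$ there are $a_n\in A_n$ with $\sup\{a_n:n\in\omega\}=1$. The game $\mathsf{G}_1(\mathbb{V}_1,\mathbb{V}_1)$: in inning $n\in\omega$ Player I plays $A_n\in\mathbb{V}_1$ and Player II picks $a_n\in A_n$; Player II wins if $\sup\{a_n:n\in\omega\}=1$, otherwise Player I wins. A strategy for Player I assigns Player I's move to each finite sequence of Player II's previous moves; it is winning if Player I wins every play following it. *)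

theory Defs
  imports Main
begin

text \<open>Supremum in the poset sense (the lattice need not be complete).\<close>
definition is_sup :: "'a::order set \<Rightarrow> 'a \<Rightarrow> bool" where
  "is_sup A s \<longleftrightarrow> (\<forall>a\<in>A. a \<le> s) \<and> (\<forall>u. (\<forall>a\<in>A. a \<le> u) \<longrightarrow> s \<le> u)"

definition has_sup :: "'a::order set \<Rightarrow> bool" where
  "has_sup A \<longleftrightarrow> (\<exists>s. is_sup A s)"

definition prime_elem :: "'a::bounded_lattice \<Rightarrow> bool" where
  "prime_elem q \<longleftrightarrow> q \<noteq> top \<and> (\<forall>a b. inf a b \<le> q \<longrightarrow> a \<le> q \<or> b \<le> q)"

definition enough_primes :: "'a::bounded_lattice itself \<Rightarrow> bool" where
  "enough_primes _ \<longleftrightarrow>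
     (\<forall>a b::'a. \<not> a \<le> b \<longrightarrow> (\<exists>q. prime_elem q \<and> b \<le> q \<and> \<not> a \<le> q))"

definition pawlikowski :: "'a::bounded_lattice itself \<Rightarrow> bool" where
  "pawlikowski T \<longleftrightarrow> enough_primes T \<and>
     (\<forall>(A::'a set) s b. is_sup A s \<longrightarrow> is_sup ((\<lambda>a. inf a b) ` A) (inf s b))"

definition V1 :: "'a::bounded_lattice set set" where
  "V1 = {A. is_sup A top}"

definition S1_V1_V1 :: "'a::bounded_lattice itself \<Rightarrow> bool" where
  "S1_V1_V1 _ \<longleftrightarrow>
     (\<forall>As :: nat \<Rightarrow> 'a set. (\<forall>n. As n \<in> V1) \<longrightarrow>
        (\<exists>a. (\<forall>n. a n \<in> As n) \<and> is_sup (range a) top))"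

text \<open>A strategy for Player I in G_1(V_1,V_1): to each finite sequence of Player II's
  previous moves it assigns a move of Player I, i.e. a member of V_1.\<close>
definition strategy_I :: "('a::bounded_lattice list \<Rightarrow> 'a set) \<Rightarrow> bool" where
  "strategy_I \<sigma> \<longleftrightarrow> (\<forall>s. \<sigma> s \<in> V1)"

definition follows :: "('a list \<Rightarrow> 'a set) \<Rightarrow> (nat \<Rightarrow> 'a) \<Rightarrow> bool" where
  "follows \<sigma> a \<longleftrightarrow> (\<forall>n. a n \<in> \<sigma> (map a [0..<n]))"

definition winning_strategy_I :: "('a::bounded_lattice list \<Rightarrow> 'a set) \<Rightarrow> bool" where
  "winning_strategy_I \<sigma> \<longleftrightarrow> strategy_I \<sigma> \<and>
     (\<forall>a. follows \<sigma> a \<longrightarrow> \<not> is_sup (range a) top)"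

end

theory Submission
  imports Defs "HOL-Library.Nat_Bijection" "HOL-Library.Infinite_Set"
begin


lemma prime_not_top: "prime_elem (q::'a::bounded_lattice) \<Longrightarrow> \<not> top \<le> q"
  unfolding prime_elem_def using top.extremum_unique by blast

lemma prime_inf: "prime_elem (q::'a::bounded_lattice) \<Longrightarrow> (\<not> inf a b \<le> q) \<longleftrightarrow> (\<not> a \<le> q \<and> \<not> b \<le> q)"
  unfolding prime_elem_def by (meson le_infI1 le_infI2)

lemma sup_top_iff:
  fixes A :: "'a::bounded_lattice set"
  assumes "enough_primes TYPE('a)"
  shows "is_sup A top \<longleftrightarrow> (\<forall>q::'a. prime_elem q \<longrightarrow> (\<exists>a\<in>A. \<not> a \<le> q))"
proof
  assume h: "is_sup A top"
  show "\<forall>q. prime_elem q \<longrightarrow> (\<exists>a\<in>A. \<not> a \<le> q)"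
  proof (intro allI impI)
    fix q :: 'a assume q: "prime_elem q"
    show "\<exists>a\<in>A. \<not> a \<le> q"
    proof (rule ccontr)
      assume "\<not> (\<exists>a\<in>A. \<not> a \<le> q)"
      hence "\<forall>a\<in>A. a \<le> q" by blast
      with h have "top \<le> q" unfolding is_sup_def by blast
      with prime_not_top[OF q] show False by blast
    qed
  qed
next
  assume h: "\<forall>q. prime_elem q \<longrightarrow> (\<exists>a\<in>A. \<not> a \<le> q)"
  show "is_sup A top"
    unfolding is_sup_def
  proof (intro conjI allI impI ballI)
    fix a assume "a \<in> A" show "a \<le> top" by simp
  next
    fix u assume ub: "\<forall>a\<in>A. a \<le> u"
    show "top \<le> u"
    proof (rule ccontr)
      assume "\<not> top \<le> u"
      then obtain q where q: "prime_elem q" "u \<le> q" "\<not> top \<le> q"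
        using assms unfolding enough_primes_def by blast
      from h q(1) obtain a where "a \<in> A" "\<not> a \<le> q" by blast
      with ub q(2) show False using order_trans by blast
    qed
  qed
qed

definition rep :: "'a::bounded_lattice \<Rightarrow> ('a \<Rightarrow> bool) \<Rightarrow> bool" where
  "rep x P \<longleftrightarrow> (\<forall>q. prime_elem q \<longrightarrow> (\<not> x \<le> q \<longleftrightarrow> P q))"

lemma rep_basic: "rep y (\<lambda>q. \<not> y \<le> q)" unfolding rep_def by simp

lemma rep_all:
  assumes "finite I" "\<forall>i\<in>I. \<exists>x. rep x (P i)"
  shows "\<exists>x::'a::bounded_lattice. rep x (\<lambda>q. \<forall>i\<in>I. P i q)"
  using assms
proof (induction I rule: finite_induct)
  case empty
  show ?case by (rule exI[of _ top]) (auto simp: rep_def prime_not_top)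
next
  case (insert i I)
  then obtain x where x: "rep x (\<lambda>q. \<forall>i\<in>I. P i q)" by blast
  from insert obtain y where y: "rep y (P i)" by blast
  show ?case
    by (rule exI[of _ "inf y x"]) (use x y in \<open>auto simp: rep_def prime_inf\<close>)
qed

lemma rep_ex:
  assumes "finite I" "\<forall>i\<in>I. \<exists>x. rep x (P i)"
  shows "\<exists>x::'a::bounded_lattice. rep x (\<lambda>q. \<exists>i\<in>I. P i q)"
  using assms
proof (induction I rule: finite_induct)
  case empty
  show ?case by (rule exI[of _ bot]) (auto simp: rep_def)
next
  case (insert i I)
  then obtain x where x: "rep x (\<lambda>q. \<exists>i\<in>I. P i q)" by blast
  from insert obtain y where y: "rep y (P i)" by blast
  show ?case
    by (rule exI[of _ "sup y x"]) (use x y in \<open>auto simp: rep_def\<close>)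
qed

lemma rep_conj:
  assumes "rep (x::'a::bounded_lattice) P" "rep y Q"
  shows "rep (inf x y) (\<lambda>q. P q \<and> Q q)"
  using assms by (auto simp: rep_def prime_inf)

lemma bounded_choice:
  assumes "finite S" "\<forall>s\<in>S. \<exists>k::nat. P s k"
  shows "\<exists>K. \<forall>s\<in>S. \<exists>k\<le>K. P s k"
  using assms
proof (induction S rule: finite_induct)
  case empty then show ?case by simp
next
  case (insert t S)
  then obtain K where K: "\<forall>s\<in>S. \<exists>k\<le>K. P s k" by blast
  from insert obtain k where k: "P t k" by blast
  have "\<forall>s\<in>insert t S. \<exists>k'\<le>max K k. P s k'"
  proof
    fix s assume "s \<in> insert t S"
    then show "\<exists>k'\<le>max K k. P s k'"
    proof
      assume "s = t" then show ?thesis using k by (intro exI[of _ k]) auto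
    next
      assume "s \<in> S" then obtain k' where "k' \<le> K" "P s k'" using K by blast
      then show ?thesis by (intro exI[of _ k']) auto
    qed
  qed
  then show ?case by blast
qed

lemma S1_large:
  assumes S1: "S1_V1_V1 TYPE('a::bounded_lattice)" and ep: "enough_primes TYPE('a)"
    and A: "\<forall>n. (A::nat \<Rightarrow> 'a set) n \<in> V1"
  shows "\<exists>x. (\<forall>n. x n \<in> A n) \<and> (\<forall>q. prime_elem q \<longrightarrow> (\<forall>L. \<exists>n\<ge>L. \<not> x n \<le> q))"
proof -
  have "\<exists>s. (\<forall>j. s j \<in> A (prod_encode (i, j))) \<and> is_sup (range s) top" for i
  proof -
    have "(\<forall>n. (\<lambda>j. A (prod_encode (i, j))) n \<in> V1) \<longrightarrow> (\<exists>a. (\<forall>n. a n \<in> (\<lambda>j. A (prod_encode (i, j))) n) \<and> is_sup (range a) top)"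
      using S1 unfolding S1_V1_V1_def by (rule spec)
    then show ?thesis using A by simp
  qed
  then obtain sel where sel: "\<And>i. (\<forall>j. sel i j \<in> A (prod_encode (i, j))) \<and> is_sup (range (sel i)) top"
    by metis
  define x where "x n = sel (fst (prod_decode n)) (snd (prod_decode n))" for n
  have "x n \<in> A n" for n
  proof -
    obtain i j where ij: "prod_decode n = (i, j)" by (cases "prod_decode n") auto
    have "n = prod_encode (i, j)" using ij by (metis prod_decode_inverse)
    then show ?thesis using sel ij unfolding x_def by simp
  qed
  moreover have "\<exists>n\<ge>L. \<not> x n \<le> q" if q: "prime_elem q" for q L
  proof -
    from sel[of L] have "is_sup (range (sel L)) top" by blast
    with q ep obtain j where j: "\<not> sel L j \<le> q" using sup_top_iff by blast
    show ?thesis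
      by (rule exI[of _ "prod_encode (L, j)"]) (simp add: x_def j le_prod_encode_1)
  qed
  ultimately show ?thesis by blast
qed



primrec used_rec :: "(nat \<Rightarrow> nat set \<Rightarrow> nat) \<Rightarrow> nat \<Rightarrow> nat set" where
  "used_rec pk 0 = {}"
| "used_rec pk (Suc N) = insert (pk N (used_rec pk N)) (used_rec pk N)"

primrec pre_rec :: "(nat \<Rightarrow> nat list \<Rightarrow> nat) \<Rightarrow> nat \<Rightarrow> nat list" where
  "pre_rec st 0 = []"
| "pre_rec st (Suc i) = pre_rec st i @ [st i (pre_rec st i)]"

lemma main_play:
  fixes \<sigma> :: "'a::bounded_lattice list \<Rightarrow> 'a set"
  assumes paw: "pawlikowski TYPE('a)" and S1: "S1_V1_V1 TYPE('a)"
    and strat: "strategy_I \<sigma>"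
  shows "\<exists>a. follows \<sigma> a \<and> is_sup (range a) top"
proof -
  have ep: "enough_primes TYPE('a)" using paw unfolding pawlikowski_def by blast
  have "\<exists>c. (\<forall>n::nat. c n \<in> \<sigma> p) \<and> is_sup (range c) top" for p
  proof -
    from S1 have all: "\<forall>As::nat \<Rightarrow> 'a set. (\<forall>n. As n \<in> V1) \<longrightarrow> (\<exists>a. (\<forall>n. a n \<in> As n) \<and> is_sup (range a) top)"
      unfolding S1_V1_V1_def .
    have "\<forall>n::nat. (\<lambda>_. \<sigma> p) n \<in> V1" using strat unfolding strategy_I_def by simp
    with spec[OF all, of "\<lambda>_. \<sigma> p"] obtain c where "\<forall>n::nat. c n \<in> (\<lambda>_. \<sigma> p) n" "is_sup (range c) top"
      by blast
    then show ?thesis by auto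
  qed
  then have "\<forall>p. \<exists>c. (\<forall>n::nat. c n \<in> \<sigma> p) \<and> is_sup (range c) top" by blast
  from choice[OF this] obtain e where e0: "\<forall>p. (\<forall>n::nat. e p n \<in> \<sigma> p) \<and> is_sup (range (e p)) top"
    by blast
  have e: "(\<forall>n::nat. e p n \<in> \<sigma> p) \<and> is_sup (range (e p)) top" for p using e0 by blast
  have e_mem: "e p n \<in> \<sigma> p" for p n using e by blast
  have e_cov: "\<exists>k. \<not> e p k \<le> q" if "prime_elem q" for p q
  proof -
    have "is_sup (range (e p)) top" using e by blast
    then show ?thesis using sup_top_iff[OF ep] that by blast
  qed
  define pos where "pos s = fold (\<lambda>k p. p @ [e p k]) s []" for s :: "nat list"
  have pos_snoc: "pos (s @ [k]) = pos s @ [e (pos s) k]" for s k unfolding pos_def by simp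
  define U where "U s k = e (pos s) k" for s k
  have U_cov: "\<exists>k. \<not> U s k \<le> q" if "prime_elem q" for s q
    unfolding U_def using e_cov that by blast
  define B where "B N = {s. set s \<subseteq> {..N} \<and> length s \<le> N}" for N :: nat
  have B_fin: "finite (B N)" for N
    unfolding B_def by (rule finite_lists_length_le) simp
  have B_mono: "N \<le> N' \<Longrightarrow> B N \<subseteq> B N'" for N N' unfolding B_def by auto
  define good where "good q N K \<longleftrightarrow> (\<forall>s\<in>B N. \<exists>k\<le>K. \<not> U s k \<le> q)" for q N K
  have good_rep: "\<exists>x. rep x (\<lambda>q. good q N K)" for N K
  proof -
    have "\<exists>x. rep x (\<lambda>q. \<forall>s\<in>B N. \<exists>k\<in>{..K}. \<not> U s k \<le> q)"
    proof (rule rep_all[OF B_fin], intro ballI)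
      fix s assume "s \<in> B N"
      show "\<exists>x. rep x (\<lambda>q. \<exists>k\<in>{..K}. \<not> U s k \<le> q)"
        by (rule rep_ex) (auto intro: rep_basic)
    qed
    then show ?thesis unfolding good_def by (simp add: atMost_iff Ball_def Bex_def)
  qed
  have good_ex: "\<exists>K. good q N K" if "prime_elem q" for q N
    unfolding good_def using bounded_choice[OF B_fin, where P="\<lambda>s k. \<not> U s k \<le> q"] U_cov[OF that] by blast
  define A where "A n = {x. \<exists>K M. rep x (\<lambda>q. good q n K \<and> good q K M)}" for n
  have A_V1: "A n \<in> V1" for n
  proof -
    have "\<exists>x\<in>A n. \<not> x \<le> q" if q: "prime_elem q" for q
    proof -
      obtain K where K: "good q n K" using good_ex[OF q] by blast
      obtain M where M: "good q K M" using good_ex[OF q] by blast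
      obtain x1 where x1: "rep x1 (\<lambda>q. good q n K)" using good_rep by blast
      obtain x2 where x2: "rep x2 (\<lambda>q. good q K M)" using good_rep by blast
      have r: "rep (inf x1 x2) (\<lambda>q. good q n K \<and> good q K M)" by (rule rep_conj[OF x1 x2])
      then have "inf x1 x2 \<in> A n" unfolding A_def by blast
      moreover have "\<not> inf x1 x2 \<le> q" using r q K M unfolding rep_def by blast
      ultimately show ?thesis by blast
    qed
    then show ?thesis unfolding V1_def using sup_top_iff[OF ep] by blast
  qed
  have A_V1': "\<forall>n. A n \<in> V1" using A_V1 by blast
  from S1_large[OF S1 ep A_V1'] obtain xA where
    xA: "\<forall>n. xA n \<in> A n" "\<forall>q. prime_elem q \<longrightarrow> (\<forall>L. \<exists>n\<ge>L. \<not> xA n \<le> q)"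
    by blast
  have "\<exists>p. rep (xA n) (\<lambda>q. good q n (fst p) \<and> good q (fst p) (snd p))" for n
  proof -
    from xA(1) obtain K M where "rep (xA n) (\<lambda>q. good q n K \<and> good q K M)" unfolding A_def by blast
    then show ?thesis by (intro exI[of _ "(K, M)"]) simp
  qed
  then have "\<forall>n. \<exists>p. rep (xA n) (\<lambda>q. good q n (fst p) \<and> good q (fst p) (snd p))" by blast
  from choice[OF this] obtain KM where
    KM: "\<forall>n. rep (xA n) (\<lambda>q. good q n (fst (KM n)) \<and> good q (fst (KM n)) (snd (KM n)))"
    by blast
  define Ks where "Ks n = fst (KM n)" for n
  define Ms where "Ms n = snd (KM n)" for n
  have goodA: "\<exists>n\<ge>L. good q n (Ks n) \<and> good q (Ks n) (Ms n)" if q: "prime_elem q" for q L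
  proof -
    obtain n where n: "n \<ge> L" "\<not> xA n \<le> q" using xA(2) q by blast
    then show ?thesis using KM q unfolding rep_def Ks_def Ms_def by blast
  qed
  define h where "h n = Suc (n + (\<Sum>i\<le>n. Ms i))" for n
  have h_mono: "h n \<le> h n'" if "n \<le> n'" for n n'
  proof -
    have "(\<Sum>i\<le>n. Ms i) \<le> (\<Sum>i\<le>n'. Ms i)" by (rule sum_mono2) (use that in auto)
    then show ?thesis unfolding h_def using that by simp
  qed
  have h_Ms: "Ms n \<le> h n" for n
  proof -
    have "Ms n \<le> (\<Sum>i\<le>n. Ms i)" by (rule member_le_sum) auto
    then show ?thesis unfolding h_def by simp
  qed
  define a where "a m = (h ^^ m) 0" for m
  have a_Suc: "a (Suc m) = h (a m)" for m unfolding a_def by simp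
  have a_0: "a 0 = 0" unfolding a_def by simp
  have a_lt: "a m < a (Suc m)" for m unfolding a_Suc h_def by simp
  have a_smono: "strict_mono a" using a_lt by (simp add: strict_mono_Suc_iff)
  have a_mono: "m \<le> m' \<Longrightarrow> a m \<le> a m'" for m m' using a_smono strict_mono_less_eq by blast
  have a_ge: "m \<le> a m" for m
  proof (induction m)
    case 0 then show ?case by simp
  next
    case (Suc m) then show ?case using a_lt[of m] by simp
  qed
  define P where "P m = {s. length s = m \<and> (\<forall>i<m. s ! i \<le> a (Suc i))}" for m
  have P_B: "P m \<subseteq> B n" if "a m \<le> n" for m n
  proof
    fix s assume s: "s \<in> P m"
    have "length s \<le> n" using s a_ge[of m] that unfolding P_def by simp
    moreover have "set s \<subseteq> {..n}"
    proof
      fix x assume "x \<in> set s"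
      then obtain i where i: "i < length s" "s ! i = x" by (auto simp: in_set_conv_nth)
      have "i < m" using i s unfolding P_def by simp
      then have "s ! i \<le> a (Suc i)" using s unfolding P_def by simp
      also have "\<dots> \<le> a m" using a_mono \<open>i < m\<close> by simp
      finally show "x \<in> {..n}" using i that by simp
    qed
    ultimately show "s \<in> B n" unfolding B_def by simp
  qed
  have P_fin: "finite (P m)" for m using P_B[of m "a m"] B_fin finite_subset by blast
  define Y where "Y q m \<longleftrightarrow> (\<forall>s\<in>P m. \<exists>k\<le>a (Suc m). \<not> U s k \<le> q)" for q m
  have Y_inf: "\<exists>m\<ge>L. Y q m" if q: "prime_elem q" for q L
  proof -
    obtain n where n: "n \<ge> Suc (a L)" "good q n (Ks n)" "good q (Ks n) (Ms n)"
      using goodA[OF q, of "Suc (a L)"] by blast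
    have ex: "\<exists>m. n \<le> a (Suc m)" using a_ge[of "Suc n"] by (intro exI[of _ n]) simp
    define m where "m = (LEAST m. n \<le> a (Suc m))"
    have m1: "n \<le> a (Suc m)" unfolding m_def by (rule LeastI_ex[OF ex])
    have m2: "a m < n"
    proof (cases m)
      case 0 then show ?thesis using n(1) a_0 by simp
    next
      case (Suc m')
      have "\<not> n \<le> a (Suc m')" using not_less_Least[of m' "\<lambda>m. n \<le> a (Suc m)"] Suc unfolding m_def by simp
      then show ?thesis using Suc by simp
    qed
    have mL: "L \<le> m"
    proof (rule ccontr)
      assume "\<not> L \<le> m"
      then have "a (Suc m) \<le> a L" using a_mono by simp
      then show False using m1 n(1) by simp
    qed
    show ?thesis
    proof (cases "Ks n \<le> a (Suc m)")
      case True
      have "Y q m" unfolding Y_def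
      proof
        fix s assume "s \<in> P m"
        then have "s \<in> B n" using P_B[of m n] m2 by auto
        then obtain k where "k \<le> Ks n" "\<not> U s k \<le> q" using n(2) unfolding good_def by blast
        then show "\<exists>k\<le>a (Suc m). \<not> U s k \<le> q" using True by (intro exI[of _ k]) simp
      qed
      then show ?thesis using mL by blast
    next
      case False
      have "Y q (Suc m)" unfolding Y_def
      proof
        fix s assume "s \<in> P (Suc m)"
        then have "s \<in> B (Ks n)" using P_B[of "Suc m" "Ks n"] False by auto
        then obtain k where k: "k \<le> Ms n" "\<not> U s k \<le> q" using n(3) unfolding good_def by blast
        have "Ms n \<le> h n" by (rule h_Ms)
        also have "\<dots> \<le> h (a (Suc m))" using h_mono m1 by blast
        also have "\<dots> = a (Suc (Suc m))" by (simp add: a_Suc)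
        finally show "\<exists>k\<le>a (Suc (Suc m)). \<not> U s k \<le> q" using k by (intro exI[of _ k]) simp
      qed
      then show ?thesis using mL by (intro exI[of _ "Suc m"]) simp
    qed
  qed
  have Y_infinite: "infinite {m. Y q m}" if "prime_elem q" for q
    unfolding infinite_nat_iff_unbounded_le using Y_inf[OF that] by blast
  define W where "W N = {x. \<exists>M G. finite M \<and> card M = Suc N \<and> (\<forall>m\<in>M. \<forall>s\<in>P m. G s \<le> a (Suc m))
      \<and> rep x (\<lambda>q. \<forall>m\<in>M. \<forall>s\<in>P m. \<not> U s (G s) \<le> q)}" for N
  have W_V1: "W N \<in> V1" for N
  proof -
    have "\<exists>x\<in>W N. \<not> x \<le> q" if q: "prime_elem q" for q
    proof -
      obtain M where M: "finite M" "card M = Suc N" "M \<subseteq> {m. Y q m}"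
        using infinite_arbitrarily_large[OF Y_infinite[OF q]] by blast
      define G where "G s = (LEAST k. \<not> U s k \<le> q)" for s
      have G_cov: "\<not> U s (G s) \<le> q" for s
        unfolding G_def using LeastI_ex[OF U_cov[OF q]] .
      have G_le: "\<forall>m\<in>M. \<forall>s\<in>P m. G s \<le> a (Suc m)"
      proof (intro ballI)
        fix m s assume "m \<in> M" "s \<in> P m"
        then have "Y q m" using M(3) by blast
        then obtain k where "k \<le> a (Suc m)" "\<not> U s k \<le> q" using \<open>s \<in> P m\<close> unfolding Y_def by blast
        then show "G s \<le> a (Suc m)" unfolding G_def using Least_le[of "\<lambda>k. \<not> U s k \<le> q" k] by simp
      qed
      have "\<exists>x. rep x (\<lambda>q. \<forall>m\<in>M. \<forall>s\<in>P m. \<not> U s (G s) \<le> q)"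
      proof (rule rep_all[OF M(1)], intro ballI)
        fix m assume "m \<in> M"
        show "\<exists>x. rep x (\<lambda>q. \<forall>s\<in>P m. \<not> U s (G s) \<le> q)"
          by (rule rep_all[OF P_fin]) (auto intro: rep_basic)
      qed
      then obtain x where x: "rep x (\<lambda>q. \<forall>m\<in>M. \<forall>s\<in>P m. \<not> U s (G s) \<le> q)" by blast
      have "x \<in> W N" unfolding W_def using M(1,2) G_le x by blast
      moreover have "\<not> x \<le> q" using x q G_cov unfolding rep_def by blast
      ultimately show ?thesis by blast
    qed
    then show ?thesis unfolding V1_def using sup_top_iff[OF ep] by blast
  qed
  have "\<exists>xB. (\<forall>N. xB N \<in> W N) \<and> is_sup (range xB) top"
  proof -
    from S1 have all: "\<forall>As::nat \<Rightarrow> 'a set. (\<forall>n. As n \<in> V1) \<longrightarrow> (\<exists>a. (\<forall>n. a n \<in> As n) \<and> is_sup (range a) top)"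
      unfolding S1_V1_V1_def .
    from spec[OF all, of W] W_V1 obtain c where "\<forall>n. c n \<in> W n" "is_sup (range c) top"
      by blast
    then show ?thesis by auto
  qed
  then obtain xB where xB: "\<forall>N. xB N \<in> W N" "is_sup (range xB) top" by blast
  have "\<forall>N. \<exists>p. finite (fst p) \<and> card (fst p) = Suc N \<and> (\<forall>m\<in>fst p. \<forall>s\<in>P m. snd p s \<le> a (Suc m))
      \<and> rep (xB N) (\<lambda>q. \<forall>m\<in>fst p. \<forall>s\<in>P m. \<not> U s (snd p s) \<le> q)"
  proof
    fix N
    from xB(1) obtain M G where "finite M \<and> card M = Suc N \<and> (\<forall>m\<in>M. \<forall>s\<in>P m. G s \<le> a (Suc m))
      \<and> rep (xB N) (\<lambda>q. \<forall>m\<in>M. \<forall>s\<in>P m. \<not> U s (G s) \<le> q)" unfolding W_def by blast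
    then show "\<exists>p. finite (fst p) \<and> card (fst p) = Suc N \<and> (\<forall>m\<in>fst p. \<forall>s\<in>P m. snd p s \<le> a (Suc m))
      \<and> rep (xB N) (\<lambda>q. \<forall>m\<in>fst p. \<forall>s\<in>P m. \<not> U s (snd p s) \<le> q)"
      by (intro exI[of _ "(M, G)"]) simp
  qed
  from choice[OF this] obtain MG where MG0: "\<forall>N. finite (fst (MG N)) \<and> card (fst (MG N)) = Suc N
      \<and> (\<forall>m\<in>fst (MG N). \<forall>s\<in>P m. snd (MG N) s \<le> a (Suc m))
      \<and> rep (xB N) (\<lambda>q. \<forall>m\<in>fst (MG N). \<forall>s\<in>P m. \<not> U s (snd (MG N) s) \<le> q)"
    by blast
  have MG: "finite (fst (MG N)) \<and> card (fst (MG N)) = Suc N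
      \<and> (\<forall>m\<in>fst (MG N). \<forall>s\<in>P m. snd (MG N) s \<le> a (Suc m))
      \<and> rep (xB N) (\<lambda>q. \<forall>m\<in>fst (MG N). \<forall>s\<in>P m. \<not> U s (snd (MG N) s) \<le> q)" for N
    using MG0 by blast
  define MN where "MN N = fst (MG N)" for N
  define GN where "GN N = snd (MG N)" for N
  have MN_fin: "finite (MN N)" and MN_card: "card (MN N) = Suc N"
    and GN_le: "\<forall>m\<in>MN N. \<forall>s\<in>P m. GN N s \<le> a (Suc m)"
    and xB_rep: "rep (xB N) (\<lambda>q. \<forall>m\<in>MN N. \<forall>s\<in>P m. \<not> U s (GN N s) \<le> q)" for N
    using MG[of N] unfolding MN_def GN_def by auto
  have xB_cov: "\<exists>N. \<forall>m\<in>MN N. \<forall>s\<in>P m. \<not> U s (GN N s) \<le> q" if q: "prime_elem q" for q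
  proof -
    obtain N where "\<not> xB N \<le> q" using xB(2) sup_top_iff[OF ep] q by blast
    then show ?thesis using xB_rep[of N] q unfolding rep_def by blast
  qed
  define pk where "pk N S = (SOME m. m \<in> MN N \<and> m \<notin> S)" for N S
  define used where "used = used_rec pk"
  define \<beta> where "\<beta> N = pk N (used N)" for N
  have used_Suc: "used (Suc N) = insert (\<beta> N) (used N)" for N
    unfolding used_def \<beta>_def by simp
  have used_fin: "finite (used N)" and used_card: "card (used N) \<le> N" for N
  proof (induction N)
    case 0
    { case 1 show ?case unfolding used_def by simp }
    { case 2 show ?case unfolding used_def by simp }
  next
    case (Suc N)
    { case 1 show ?case using Suc.IH(1) used_Suc by simp }
    { case 2 show ?case using Suc.IH used_Suc card_insert_le_m1 by (simp add: card_insert_if) }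
  qed
  have pk_ok: "pk N S \<in> MN N \<and> pk N S \<notin> S" if "finite S" "card S \<le> N" for N S
  proof -
    have "\<not> MN N \<subseteq> S"
    proof
      assume "MN N \<subseteq> S"
      then have "card (MN N) \<le> card S" using card_mono that(1) by blast
      then show False using MN_card[of N] that(2) by simp
    qed
    then have "\<exists>m. m \<in> MN N \<and> m \<notin> S" by blast
    then show ?thesis unfolding pk_def by (rule someI_ex)
  qed
  have \<beta>_mem: "\<beta> N \<in> MN N" and \<beta>_new: "\<beta> N \<notin> used N" for N
    using pk_ok[OF used_fin used_card] unfolding \<beta>_def by blast+
  have \<beta>_used: "\<beta> N' \<in> used N" if "N' < N" for N' N
    using that
  proof (induction N)
    case 0 then show ?case by simp
  next
    case (Suc N)
    then show ?case using used_Suc[of N] by (cases "N' = N") auto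
  qed
  have \<beta>_inj: "inj \<beta>"
  proof (rule injI)
    fix N N' assume eq: "\<beta> N = \<beta> N'"
    show "N = N'"
    proof (rule ccontr)
      assume "N \<noteq> N'"
      then have "N < N' \<or> N' < N" by arith
      then show False
      proof
        assume "N < N'" then show False using \<beta>_used[of N N'] \<beta>_new[of N'] eq by simp
      next
        assume "N' < N" then show False using \<beta>_used[of N' N] \<beta>_new[of N] eq by simp
      qed
    qed
  qed
  define stp where "stp i s = (if i \<in> range \<beta> then GN (inv \<beta> i) s else 0)" for i s
  define pre where "pre = pre_rec stp"
  have pre_Suc: "pre (Suc i) = pre i @ [stp i (pre i)]" for i unfolding pre_def by simp
  define play where "play i = U (pre i) (stp i (pre i))" for i
  have pos_pre: "pos (pre i) = map play [0..<i]" for i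
  proof (induction i)
    case 0 then show ?case unfolding pre_def pos_def by simp
  next
    case (Suc i)
    show ?case using Suc pre_Suc[of i] pos_snoc unfolding play_def U_def by simp
  qed
  have stp_beta: "stp (\<beta> N) s = GN N s" for N s
    unfolding stp_def using \<beta>_inj by simp
  have pre_P: "pre i \<in> P i" for i
  proof (induction i)
    case 0 then show ?case unfolding pre_def P_def by simp
  next
    case (Suc i)
    have len: "length (pre i) = i" using Suc unfolding P_def by simp
    have st: "stp i (pre i) \<le> a (Suc i)"
    proof (cases "i \<in> range \<beta>")
      case True
      then obtain N where N: "i = \<beta> N" by blast
      then have "i \<in> MN N" using \<beta>_mem by simp
      then have "GN N (pre i) \<le> a (Suc i)" using GN_le[of N] Suc by blast
      then show ?thesis using N stp_beta by simp
    next
      case False then show ?thesis unfolding stp_def by simp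
    qed
    have "\<forall>j<Suc i. (pre (Suc i)) ! j \<le> a (Suc j)"
    proof (intro allI impI)
      fix j assume j: "j < Suc i"
      show "pre (Suc i) ! j \<le> a (Suc j)"
      proof (cases "j < i")
        case True
        then have "pre (Suc i) ! j = pre i ! j" using pre_Suc len by (simp add: nth_append)
        then show ?thesis using Suc True unfolding P_def by simp
      next
        case False
        then have "j = i" using j by simp
        then have "pre (Suc i) ! j = stp i (pre i)" using pre_Suc len by (simp add: nth_append)
        then show ?thesis using st \<open>j = i\<close> by simp
      qed
    qed
    then show ?case using len pre_Suc unfolding P_def by simp
  qed
  have "follows \<sigma> play"
    unfolding follows_def
  proof
    fix n
    have "play n = e (pos (pre n)) (stp n (pre n))" unfolding play_def U_def by simp
    also have "\<dots> \<in> \<sigma> (pos (pre n))" by (rule e_mem)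
    finally show "play n \<in> \<sigma> (map play [0..<n])" using pos_pre by simp
  qed
  moreover have "is_sup (range play) top"
    unfolding sup_top_iff[OF ep]
  proof (intro allI impI)
    fix q :: 'a assume q: "prime_elem q"
    obtain N where N: "\<forall>m\<in>MN N. \<forall>s\<in>P m. \<not> U s (GN N s) \<le> q" using xB_cov[OF q] by blast
    have "\<not> U (pre (\<beta> N)) (GN N (pre (\<beta> N))) \<le> q"
      using N \<beta>_mem[of N] pre_P[of "\<beta> N"] by blast
    then have "\<not> play (\<beta> N) \<le> q" unfolding play_def using stp_beta by simp
    then show "\<exists>x\<in>range play. \<not> x \<le> q" by blast
  qed
  ultimately show ?thesis by blast
qed

theorem theorem2p4:
  assumes "pawlikowski TYPE('a::bounded_lattice)"
    and "S1_V1_V1 TYPE('a)"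
  shows "\<not> (\<exists>\<sigma> :: 'a list \<Rightarrow> 'a set. winning_strategy_I \<sigma>)"
proof
  assume "\<exists>\<sigma> :: 'a list \<Rightarrow> 'a set. winning_strategy_I \<sigma>"
  then obtain \<sigma> :: "'a list \<Rightarrow> 'a set" where w: "winning_strategy_I \<sigma>" by blast
  then have "strategy_I \<sigma>" unfolding winning_strategy_I_def by blast
  from main_play[OF assms this] obtain a where "follows \<sigma> a" "is_sup (range a) top" by blast
  with w show False unfolding winning_strategy_I_def by blast
qed

end
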